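(* Let $\mathsf P$ be a rider piece having three distinct basic moves $m_1=(c_1,d_1)$, $m_2=(c_2,d_2)$, $m_3=(c_3,d_3)$, and let $q=3$ on the square board $[0,1]^2$. Let $w_1,w_2,w_3$ be nonzero integers with $\gcd(w_1,w_2,w_3)=1$ and $w_1m_1+w_2m_2+w_3m_3=(0,0)$. Consider a triangular configuration $\mathbf z=(z_1,z_2,z_3)$ of three pieces (a nondegenerate triangle with vertices in $[0,1]^2$) in which the pieces attack pairwise along the three distinct move directions $m_1,m_2,m_3$ (i.e. $\mathbf z$ lies in three move hyperplanes, one for each pair of pieces, using the three different moves), together with three fixations that fix its position in the square (i.e. these three move equations and three fixations have $\mathbf z$ as their unique common solution). Then $\mathbf z$ is a vertex of the inside-out polytope $([0,1]^6,\mathcal A_{\mathsf P})$ and its denominator is $$\Delta(\mathbf z)=\max(|w_1c_1|,|w_1d_1|,|w_2c_2|,|w_2d_2|,|w_3c_3|,|w_3d_3|).$$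
   Context: A rider piece has a finite set of basic moves: nonzero integer vectors $(c,d)$ with $\gcd(c,d)=1$, no two parallel (so $w_1,w_2,w_3$ exist and are unique up to simultaneous negation). For $3$ pieces, configurations are points $(z_1,z_2,z_3)\in\mathbb R^6$, $z_i=(x_i,y_i)$; the move hyperplane for move $(c,d)$ and pieces $i,j$ is $\mathcal H^{d/c}_{ij}=\{(z_j-z_i)\cdot(d,-c)=0\}$, and $\mathcal A_{\mathsf P}$ is the set of all these. A fixation is one of the equations $x_i=0$, $y_i=0$, $x_i=1$, $y_i=1$. A vertex of $([0,1]^6,\mathcal A_{\mathsf P})$ is a point of $[0,1]^6$ that is the unique common solution of some move equations and fixations. $\Delta(\mathbf z)$ is the least common denominator of the coordinates of $\mathbf z$. *)

theory Defs
  imports Main "HOL-Library.Numeral_Type" Complex_Main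
begin

definition rider_piece :: "(int \<times> int) set \<Rightarrow> bool" where
  "rider_piece M \<longleftrightarrow> finite M \<and>
     (\<forall>(c,d)\<in>M. gcd c d = 1) \<and>
     (\<forall>(c,d)\<in>M. \<forall>(c',d')\<in>M. (c,d) \<noteq> (c',d') \<longrightarrow> c * d' \<noteq> d * c')"

datatype piece = P1 | P2 | P3

type_synonym config = "piece \<Rightarrow> real \<times> real"

definition in_box :: "config \<Rightarrow> bool" where
  "in_box z \<longleftrightarrow> (\<forall>i. fst (z i) \<in> {0..1} \<and> snd (z i) \<in> {0..1})"

datatype coord = CX | CY

datatype eqn = MoveEq "int \<times> int" piece piece | Fixation coord piece real

fun sat :: "eqn \<Rightarrow> config \<Rightarrow> bool" where
  "sat (MoveEq (c,d) i j) z \<longleftrightarrow>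
     (fst (z j) - fst (z i)) * of_int d - (snd (z j) - snd (z i)) * of_int c = 0"
| "sat (Fixation CX i a) z \<longleftrightarrow> fst (z i) = a"
| "sat (Fixation CY i a) z \<longleftrightarrow> snd (z i) = a"

definition move_eqn :: "(int \<times> int) set \<Rightarrow> eqn \<Rightarrow> bool" where
  "move_eqn M e \<longleftrightarrow> (\<exists>m i j. m \<in> M \<and> i \<noteq> j \<and> e = MoveEq m i j)"

definition fixation :: "eqn \<Rightarrow> bool" where
  "fixation e \<longleftrightarrow> (\<exists>k i a. a \<in> {0, 1} \<and> e = Fixation k i a)"

definition solutions :: "eqn set \<Rightarrow> config set" where
  "solutions E = {v. \<forall>e\<in>E. sat e v}"

definition is_vertex :: "(int \<times> int) set \<Rightarrow> config \<Rightarrow> bool" where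
  "is_vertex M z \<longleftrightarrow> in_box z \<and>
     (\<exists>E. (\<forall>e\<in>E. move_eqn M e \<or> fixation e) \<and> solutions E = {z})"

definition Delta :: "config \<Rightarrow> nat" where
  "Delta z = (LEAST D::nat. D > 0 \<and>
     (\<forall>i. of_nat D * fst (z i) \<in> \<int> \<and> of_nat D * snd (z i) \<in> \<int>))"

end

theory Submission
  imports Defs
begin



lemma par_lemma:
  fixes X Y :: real and c d :: int
  assumes "X * of_int d - Y * of_int c = 0" "gcd c d = 1"
  shows "\<exists>s. X = s * of_int c \<and> Y = s * of_int d"
proof -
  have "c \<noteq> 0 \<or> d \<noteq> 0" using assms(2) by auto
  hence nz: "(of_int c)^2 + (of_int d)^2 \<noteq> (0::real)" by auto
  define s where "s = (X * of_int c + Y * of_int d) / ((of_int c)^2 + (of_int d)^2)"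
  have e: "X * of_int d = Y * of_int c" using assms(1) by simp
  have e2: "X * of_int d * of_int d = Y * of_int c * of_int d" using e by simp
  have e3: "Y * of_int c * of_int c = X * of_int d * of_int c" using e by simp
  have "X * ((of_int c)^2 + (of_int d)^2) = (X * of_int c + Y * of_int d) * of_int c"
    using e2 by (simp add: algebra_simps power2_eq_square)
  hence "X = s * of_int c" unfolding s_def using nz by (simp add: field_simps)
  moreover have "Y * ((of_int c)^2 + (of_int d)^2) = (X * of_int c + Y * of_int d) * of_int d"
    using e3 by (simp add: algebra_simps power2_eq_square)
  hence "Y = s * of_int d" unfolding s_def using nz by (simp add: field_simps)
  ultimately show ?thesis by blast
qed

lemma indep_lemma:
  fixes A B :: real and c1 d1 c2 d2 :: int
  assumes "A * c1 + B * c2 = 0" "A * d1 + B * d2 = 0" "c1 * d2 \<noteq> d1 * c2"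
  shows "A = 0 \<and> B = 0"
proof -
  have "A * (of_int c1 * of_int d2 - of_int d1 * of_int c2) = (A * c1 + B * c2) * d2 - (A * d1 + B * d2) * c2"
    by (simp add: algebra_simps)
  hence "A * (of_int c1 * of_int d2 - of_int d1 * of_int c2) = 0" using assms(1,2) by simp
  moreover have "(of_int c1 * of_int d2 - of_int d1 * of_int c2 :: real) \<noteq> 0"
    using assms(3) by (metis eq_iff_diff_eq_0 of_int_eq_iff of_int_mult)
  ultimately have "A = 0" by simp
  moreover have "B * (of_int c1 * of_int d2 - of_int d1 * of_int c2) = (A * d1 + B * d2) * c1 - (A * c1 + B * c2) * d1"
    by (simp add: algebra_simps)
  hence "B * (of_int c1 * of_int d2 - of_int d1 * of_int c2) = 0" using assms(1,2) by simp
  ultimately show ?thesis using \<open>_ \<noteq> 0\<close> by simp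
qed

lemma fam_move:
  assumes "sat (MoveEq m i j) z"
  shows "sat (MoveEq m i j) (\<lambda>k. (a + \<mu> * fst (z k), b + \<mu> * snd (z k)))"
proof -
  obtain c d where m: "m = (c,d)" by force
  have "(a + \<mu> * fst (z j) - (a + \<mu> * fst (z i))) * of_int d - (b + \<mu> * snd (z j) - (b + \<mu> * snd (z i))) * of_int c
     = \<mu> * ((fst (z j) - fst (z i)) * of_int d - (snd (z j) - snd (z i)) * of_int c)"
    by (simp add: algebra_simps)
  then show ?thesis using assms m by simp
qed

lemma fix_cases:
  assumes "fixation f" "sat f z"
  shows "(\<exists>i a. f = Fixation CX i a \<and> a \<in> {0,1} \<and> fst (z i) = a) \<or>
         (\<exists>i a. f = Fixation CY i a \<and> a \<in> {0,1} \<and> snd (z i) = a)"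
proof -
  obtain k i a where "a \<in> {0,1}" "f = Fixation k i a" using assms(1) unfolding fixation_def by blast
  then show ?thesis using assms(2) by (cases k) auto
qed

lemma dvd_coprime2:
  fixes N k c d :: int
  assumes "N dvd k * c" "N dvd k * d" "gcd c d = 1"
  shows "N dvd k"
proof -
  have "N dvd gcd (k*c) (k*d)" using assms by simp
  also have "gcd (k*c) (k*d) = \<bar>k\<bar>" using gcd_mult_distrib_int[of k c d] assms(3) by simp
  finally show ?thesis by simp
qed

lemma dvd_coprime3:
  fixes N k a b c :: int
  assumes "N dvd k * a" "N dvd k * b" "N dvd k * c" "gcd a (gcd b c) = 1"
  shows "N dvd k"
proof -
  have "N dvd gcd (k*b) (k*c)" using assms by simp
  also have "gcd (k*b) (k*c) = \<bar>k\<bar> * gcd b c" using gcd_mult_distrib_int[of k b c] by simp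
  also have "\<bar>k\<bar> * gcd b c = \<bar>k * gcd b c\<bar>" by (simp add: abs_mult)
  finally have "N dvd k * gcd b c" by simp
  then show ?thesis using dvd_coprime2[of N k a "gcd b c"] assms(1,4) by simp
qed

lemma ints_div_dvd:
  fixes a N :: int
  assumes "(of_int a / of_int N :: real) \<in> \<int>" "N \<noteq> 0"
  shows "N dvd a"
proof -
  obtain m where "of_int a / of_int N = (of_int m :: real)" using assms(1) Ints_cases by blast
  hence "(of_int a :: real) = of_int m * of_int N" using assms(2) by (simp add: field_simps)
  hence "a = m * N" by (metis of_int_eq_iff of_int_mult)
  thus ?thesis by simp
qed



lemma core:
  fixes c1 d1 c2 d2 c3 d3 w1 w2 w3 :: int and z :: config and f1 f2 f3 :: eqn
  assumes g1: "gcd c1 d1 = 1" and g2: "gcd c2 d2 = 1" and g3: "gcd c3 d3 = 1"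
    and p12: "c1 * d2 \<noteq> d1 * c2"
    and w3: "w3 \<noteq> 0"
    and gw: "gcd w1 (gcd w2 w3) = 1"
    and rc: "w1 * c1 + w2 * c2 + w3 * c3 = 0" and rd: "w1 * d1 + w2 * d2 + w3 * d3 = 0"
    and box: "in_box z"
    and nd: "(fst (z P2) - fst (z P1)) * (snd (z P3) - snd (z P1))
         - (snd (z P2) - snd (z P1)) * (fst (z P3) - fst (z P1)) \<noteq> 0"
    and fx: "fixation f1" "fixation f2" "fixation f3"
    and sol: "solutions {MoveEq (c1,d1) P1 P2, MoveEq (c2,d2) P1 P3, MoveEq (c3,d3) P2 P3, f1, f2, f3} = {z}"
  shows "int (Delta z) = max \<bar>w1 * c1\<bar> (max \<bar>w1 * d1\<bar> (max \<bar>w2 * c2\<bar>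
                     (max \<bar>w2 * d2\<bar> (max \<bar>w3 * c3\<bar> \<bar>w3 * d3\<bar>))))"
proof -
  define E where "E = {MoveEq (c1,d1) P1 P2, MoveEq (c2,d2) P1 P3, MoveEq (c3,d3) P2 P3, f1, f2, f3}"
  have satz: "\<forall>e\<in>E. sat e z" using sol unfolding E_def solutions_def by blast
  have uniq: "z' = z" if "\<forall>e\<in>E. sat e z'" for z' using sol that unfolding E_def solutions_def by blast
  have m1: "sat (MoveEq (c1,d1) P1 P2) z" and m2: "sat (MoveEq (c2,d2) P1 P3) z"
    and m3: "sat (MoveEq (c3,d3) P2 P3) z" and sf: "sat f1 z" "sat f2 z" "sat f3 z"
    using satz unfolding E_def by auto
  have fam: "\<forall>e\<in>{MoveEq (c1,d1) P1 P2, MoveEq (c2,d2) P1 P3, MoveEq (c3,d3) P2 P3}.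
      sat e (\<lambda>k. (a + \<mu> * fst (z k), b + \<mu> * snd (z k)))" for a b \<mu>
    using fam_move m1 m2 m3 by blast
  have fxall: "\<forall>f\<in>{f1,f2,f3}. fixation f \<and> sat f z" using fx sf by auto
  have F1: "\<exists>i. fst (z i) \<in> {0,1}"
  proof (rule ccontr)
    assume n: "\<not> ?thesis"
    define z' where "z' = (\<lambda>k. (1 + 1 * fst (z k), 0 + 1 * snd (z k)))"
    have "\<forall>e\<in>E. sat e z'"
    proof
      fix e assume "e \<in> E"
      then consider "e \<in> {MoveEq (c1,d1) P1 P2, MoveEq (c2,d2) P1 P3, MoveEq (c3,d3) P2 P3}"
        | "e \<in> {f1,f2,f3}" unfolding E_def by blast
      then show "sat e z'"
      proof cases
        case 1 then show ?thesis using fam unfolding z'_def by blast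
      next
        case 2
        then have "fixation e" "sat e z" using fxall by auto
        from fix_cases[OF this] n show ?thesis unfolding z'_def by auto
      qed
    qed
    then have "z' = z" by (rule uniq)
    then have "fst (z' P1) = fst (z P1)" by simp
    then show False unfolding z'_def by simp
  qed
  have F2: "\<exists>i. snd (z i) \<in> {0,1}"
  proof (rule ccontr)
    assume n: "\<not> ?thesis"
    define z' where "z' = (\<lambda>k. (0 + 1 * fst (z k), 1 + 1 * snd (z k)))"
    have "\<forall>e\<in>E. sat e z'"
    proof
      fix e assume "e \<in> E"
      then consider "e \<in> {MoveEq (c1,d1) P1 P2, MoveEq (c2,d2) P1 P3, MoveEq (c3,d3) P2 P3}"
        | "e \<in> {f1,f2,f3}" unfolding E_def by blast
      then show "sat e z'"
      proof cases
        case 1 then show ?thesis using fam unfolding z'_def by blast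
      next
        case 2
        then have "fixation e" "sat e z" using fxall by auto
        from fix_cases[OF this] n show ?thesis unfolding z'_def by auto
      qed
    qed
    then have "z' = z" by (rule uniq)
    then have "snd (z' P1) = snd (z P1)" by simp
    then show False unfolding z'_def by simp
  qed
  have F3: "(\<exists>i j. fst (z i) = 0 \<and> fst (z j) = 1) \<or> (\<exists>i j. snd (z i) = 0 \<and> snd (z j) = 1)"
  proof (rule ccontr)
    assume n: "\<not> ?thesis"
    define ax where "ax = (if \<exists>i. fst (z i) = 1 then 1 else (0::real))"
    define ay where "ay = (if \<exists>i. snd (z i) = 1 then 1 else (0::real))"
    have ax: "fst (z i) = ax" if "fst (z i) \<in> {0,1}" for i
      using that n unfolding ax_def by auto
    have ay: "snd (z i) = ay" if "snd (z i) \<in> {0,1}" for i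
      using that n unfolding ay_def by auto
    define z' where "z' = (\<lambda>k. (- ax + 2 * fst (z k), - ay + 2 * snd (z k)))"
    have "\<forall>e\<in>E. sat e z'"
    proof
      fix e assume "e \<in> E"
      then consider "e \<in> {MoveEq (c1,d1) P1 P2, MoveEq (c2,d2) P1 P3, MoveEq (c3,d3) P2 P3}"
        | "e \<in> {f1,f2,f3}" unfolding E_def by blast
      then show "sat e z'"
      proof cases
        case 1 then show ?thesis using fam unfolding z'_def by blast
      next
        case 2
        then have "fixation e" "sat e z" using fxall by auto
        from fix_cases[OF this] show ?thesis unfolding z'_def
        proof
          assume "\<exists>i a. e = Fixation CX i a \<and> a \<in> {0, 1} \<and> fst (z i) = a"
          then obtain i a where "e = Fixation CX i a" "a \<in> {0,1}" "fst (z i) = a" by blast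
          moreover have "fst (z i) = ax" using ax calculation by auto
          ultimately show "sat e (\<lambda>k. (- ax + 2 * fst (z k), - ay + 2 * snd (z k)))" by simp
        next
          assume "\<exists>i a. e = Fixation CY i a \<and> a \<in> {0, 1} \<and> snd (z i) = a"
          then obtain i a where "e = Fixation CY i a" "a \<in> {0,1}" "snd (z i) = a" by blast
          moreover have "snd (z i) = ay" using ay calculation by auto
          ultimately show "sat e (\<lambda>k. (- ax + 2 * fst (z k), - ay + 2 * snd (z k)))" by simp
        qed
      qed
    qed
    then have "z' = z" by (rule uniq)
    then have "\<forall>k. z' k = z k" by simp
    then have "\<forall>k. fst (z k) = ax \<and> snd (z k) = ay" unfolding z'_def by (auto simp: prod_eq_iff)
    then show False using nd by simp
  qed
  obtain s :: real where s: "fst (z P2) - fst (z P1) = s * of_int c1" "snd (z P2) - snd (z P1) = s * of_int d1"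
    using par_lemma[OF _ g1, of "fst (z P2) - fst (z P1)" "snd (z P2) - snd (z P1)"] m1 by auto
  obtain t :: real where t: "fst (z P3) - fst (z P1) = t * of_int c2" "snd (z P3) - snd (z P1) = t * of_int d2"
    using par_lemma[OF _ g2, of "fst (z P3) - fst (z P1)" "snd (z P3) - snd (z P1)"] m2 by auto
  obtain u :: real where u: "fst (z P3) - fst (z P2) = u * of_int c3" "snd (z P3) - snd (z P2) = u * of_int d3"
    using par_lemma[OF _ g3, of "fst (z P3) - fst (z P2)" "snd (z P3) - snd (z P2)"] m3 by auto
  define l where "l = u / w3"
  have rc': "(of_int w3 :: real) * c3 = - w1 * c1 - w2 * c2" using rc by (simp add: algebra_simps flip: of_int_mult of_int_add of_int_minus of_int_diff) 
  have rd': "(of_int w3 :: real) * d3 = - w1 * d1 - w2 * d2" using rd by (simp add: algebra_simps flip: of_int_mult of_int_add of_int_minus of_int_diff)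
  have ul: "u = l * w3" unfolding l_def using w3 by simp
  have "(s - l * w1) * c1 + (- t - l * w2) * c2 = 0"
  proof -
    have "s * c1 - t * c2 + u * c3 = 0" using s t u by simp
    moreover have "u * c3 = l * (w3 * c3)" by (simp add: ul)
    moreover have "l * (w3 * c3) = l * (- w1 * c1 - w2 * c2)" using rc' by simp
    moreover have "(s - l * w1) * c1 + (- t - l * w2) * c2 = s * c1 - t * c2 + l * (- w1 * c1 - w2 * c2)"
      by (simp add: algebra_simps)
    ultimately show ?thesis by linarith
  qed
  moreover have "(s - l * w1) * d1 + (- t - l * w2) * d2 = 0"
  proof -
    have "s * d1 - t * d2 + u * d3 = 0" using s t u by simp
    moreover have "u * d3 = l * (w3 * d3)" by (simp add: ul)
    moreover have "l * (w3 * d3) = l * (- w1 * d1 - w2 * d2)" using rd' by simp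
    moreover have "(s - l * w1) * d1 + (- t - l * w2) * d2 = s * d1 - t * d2 + l * (- w1 * d1 - w2 * d2)"
      by (simp add: algebra_simps)
    ultimately show ?thesis by linarith
  qed
  ultimately have "s - l * w1 = 0 \<and> - t - l * w2 = 0" using indep_lemma p12 by blast
  then have st: "s = l * w1" "t = - l * w2" by simp_all
  have dx12: "fst (z P2) - fst (z P1) = l * (w1 * c1)" "snd (z P2) - snd (z P1) = l * (w1 * d1)"
    using s st by simp_all
  have dx13: "fst (z P3) - fst (z P1) = - l * (w2 * c2)" "snd (z P3) - snd (z P1) = - l * (w2 * d2)"
    using t st by simp_all
  have dx23: "fst (z P3) - fst (z P2) = l * (w3 * c3)" "snd (z P3) - snd (z P2) = l * (w3 * d3)"
    using u ul by simp_all
  define N where "N = max \<bar>w1 * c1\<bar> (max \<bar>w1 * d1\<bar> (max \<bar>w2 * c2\<bar>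
                     (max \<bar>w2 * d2\<bar> (max \<bar>w3 * c3\<bar> \<bar>w3 * d3\<bar>))))"
  define ax :: "piece \<Rightarrow> int" where "ax k = (case k of P1 \<Rightarrow> 0 | P2 \<Rightarrow> w1 * c1 | P3 \<Rightarrow> - (w2 * c2))" for k
  define ay :: "piece \<Rightarrow> int" where "ay k = (case k of P1 \<Rightarrow> 0 | P2 \<Rightarrow> w1 * d1 | P3 \<Rightarrow> - (w2 * d2))" for k
  have X: "fst (z k) = fst (z P1) + l * ax k" for k
    using dx12 dx13 by (cases k) (auto simp: ax_def algebra_simps)
  have Y: "snd (z k) = snd (z P1) + l * ay k" for k
    using dx12 dx13 by (cases k) (auto simp: ay_def algebra_simps)
  have axN: "\<bar>ax j - ax i\<bar> \<le> N" for i j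
  proof -
    have e: "- (w2 * c2) - w1 * c1 = w3 * c3" "w1 * c1 - - (w2 * c2) = - (w3 * c3)" "\<bar>w1 * c1 + w2 * c2\<bar> = \<bar>w3 * c3\<bar>" using rc by (simp_all add: abs_minus_commute)
    have le: "\<bar>w1 * c1\<bar> \<le> N" "\<bar>w2 * c2\<bar> \<le> N" "\<bar>w3 * c3\<bar> \<le> N" "0 \<le> N" by (simp_all add: N_def le_max_iff_disj)
    show ?thesis by (cases i; cases j) (simp_all add: ax_def e le)
  qed
  have ayN: "\<bar>ay j - ay i\<bar> \<le> N" for i j
  proof -
    have e: "- (w2 * d2) - w1 * d1 = w3 * d3" "w1 * d1 - - (w2 * d2) = - (w3 * d3)" "\<bar>w1 * d1 + w2 * d2\<bar> = \<bar>w3 * d3\<bar>" using rd by (simp_all add: abs_minus_commute)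
    have le: "\<bar>w1 * d1\<bar> \<le> N" "\<bar>w2 * d2\<bar> \<le> N" "\<bar>w3 * d3\<bar> \<le> N" "0 \<le> N" by (simp_all add: N_def le_max_iff_disj)
    show ?thesis by (cases i; cases j) (simp_all add: ay_def e le)
  qed
  have dX: "fst (z j) - fst (z i) = l * of_int (ax j - ax i)" for i j
    using X[of i] X[of j] by (simp add: algebra_simps)
  have dY: "snd (z j) - snd (z i) = l * of_int (ay j - ay i)" for i j
    using Y[of i] Y[of j] by (simp add: algebra_simps)
  have bX: "\<bar>fst (z j) - fst (z i)\<bar> \<le> \<bar>l\<bar> * of_int N" for i j
  proof -
    have "\<bar>fst (z j) - fst (z i)\<bar> = \<bar>l\<bar> * of_int \<bar>ax j - ax i\<bar>" using dX by (simp add: abs_mult)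
    also have "\<dots> \<le> \<bar>l\<bar> * of_int N" using axN[of j i] by (intro mult_left_mono) auto
    finally show ?thesis .
  qed
  have bY: "\<bar>snd (z j) - snd (z i)\<bar> \<le> \<bar>l\<bar> * of_int N" for i j
  proof -
    have "\<bar>snd (z j) - snd (z i)\<bar> = \<bar>l\<bar> * of_int \<bar>ay j - ay i\<bar>" using dY by (simp add: abs_mult)
    also have "\<dots> \<le> \<bar>l\<bar> * of_int N" using ayN[of j i] by (intro mult_left_mono) auto
    finally show ?thesis .
  qed
  have boxX: "\<bar>fst (z j) - fst (z i)\<bar> \<le> 1" for i j using box unfolding in_box_def
    by (smt (verit) atLeastAtMost_iff)
  have boxY: "\<bar>snd (z j) - snd (z i)\<bar> \<le> 1" for i j using box unfolding in_box_def
    by (smt (verit) atLeastAtMost_iff)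
  have Nmem: "N = \<bar>w1 * c1\<bar> \<or> N = \<bar>w1 * d1\<bar> \<or> N = \<bar>w2 * c2\<bar> \<or> N = \<bar>w2 * d2\<bar> \<or> N = \<bar>w3 * c3\<bar> \<or> N = \<bar>w3 * d3\<bar>"
    unfolding N_def by (simp add: max_def)
  have up: "\<bar>l\<bar> * of_int N \<le> 1"
  proof -
    have "\<bar>l * of_int (w1 * c1)\<bar> \<le> 1" using boxX[of P2 P1] dx12 by simp
    moreover have "\<bar>l * of_int (w1 * d1)\<bar> \<le> 1" using boxY[of P2 P1] dx12 by simp
    moreover have "\<bar>- l * of_int (w2 * c2)\<bar> \<le> 1" using boxX[of P3 P1] dx13 by simp
    moreover have "\<bar>- l * of_int (w2 * d2)\<bar> \<le> 1" using boxY[of P3 P1] dx13 by simp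
    moreover have "\<bar>l * of_int (w3 * c3)\<bar> \<le> 1" using boxX[of P3 P2] dx23 by simp
    moreover have "\<bar>l * of_int (w3 * d3)\<bar> \<le> 1" using boxY[of P3 P2] dx23 by simp
    ultimately have "\<bar>l\<bar> * \<bar>of_int (w1 * c1)\<bar> \<le> 1" "\<bar>l\<bar> * \<bar>of_int (w1 * d1)\<bar> \<le> 1"
      "\<bar>l\<bar> * \<bar>of_int (w2 * c2)\<bar> \<le> 1" "\<bar>l\<bar> * \<bar>of_int (w2 * d2)\<bar> \<le> 1"
      "\<bar>l\<bar> * \<bar>of_int (w3 * c3)\<bar> \<le> 1" "\<bar>l\<bar> * \<bar>of_int (w3 * d3)\<bar> \<le> 1"
      by (simp_all only: abs_mult abs_minus mult_minus_left)
    then show ?thesis using Nmem by (elim disjE) (simp_all only: of_int_abs)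
  qed
  have lo: "1 \<le> \<bar>l\<bar> * of_int N"
    using F3
  proof
    assume "\<exists>i j. fst (z i) = 0 \<and> fst (z j) = 1"
    then obtain i j where "fst (z i) = 0" "fst (z j) = 1" by blast
    then show ?thesis using bX[of j i] by simp
  next
    assume "\<exists>i j. snd (z i) = 0 \<and> snd (z j) = 1"
    then obtain i j where "snd (z i) = 0" "snd (z j) = 1" by blast
    then show ?thesis using bY[of j i] by simp
  qed
  have lN: "\<bar>l\<bar> * of_int N = 1" using up lo by simp
  have Npos: "N > 0"
  proof -
    have "N \<ge> 0" unfolding N_def by (simp add: le_max_iff_disj)
    moreover have "N \<noteq> 0" using lN by auto
    ultimately show ?thesis by simp
  qed
  define \<sigma> where "\<sigma> = l * of_int N"
  have \<sigma>: "\<sigma> = 1 \<or> \<sigma> = -1" using lN unfolding \<sigma>_def by (auto simp: abs_mult abs_if split: if_splits)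
  have \<sigma>Z: "\<sigma> \<in> \<int>" using \<sigma> by auto
  have \<sigma>2: "\<sigma> * \<sigma> = 1" using \<sigma> by auto
  have lval: "l = \<sigma> / of_int N" unfolding \<sigma>_def using Npos by simp
  have intX: "of_int N * (fst (z j) - fst (z i)) \<in> \<int>" for i j
  proof -
    have "of_int N * (fst (z j) - fst (z i)) = \<sigma> * of_int (ax j - ax i)"
      unfolding dX \<sigma>_def by (simp add: algebra_simps)
    then show ?thesis using \<sigma>Z by simp
  qed
  have intY: "of_int N * (snd (z j) - snd (z i)) \<in> \<int>" for i j
  proof -
    have "of_int N * (snd (z j) - snd (z i)) = \<sigma> * of_int (ay j - ay i)"
      unfolding dY \<sigma>_def by (simp add: algebra_simps)
    then show ?thesis using \<sigma>Z by simp
  qed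
  obtain i0 where i0: "fst (z i0) \<in> {0,1}" using F1 by blast
  obtain j0 where j0: "snd (z j0) \<in> {0,1}" using F2 by blast
  have allX: "of_int N * fst (z i) \<in> \<int>" for i
  proof -
    have "of_int N * fst (z i) = of_int N * (fst (z i) - fst (z i0)) + of_int N * fst (z i0)"
      by (simp add: algebra_simps)
    moreover have "of_int N * fst (z i0) \<in> \<int>" using i0 by auto
    ultimately show ?thesis using intX by (metis Ints_add)
  qed
  have allY: "of_int N * snd (z i) \<in> \<int>" for i
  proof -
    have "of_int N * snd (z i) = of_int N * (snd (z i) - snd (z j0)) + of_int N * snd (z j0)"
      by (simp add: algebra_simps)
    moreover have "of_int N * snd (z j0) \<in> \<int>" using j0 by auto
    ultimately show ?thesis using intY by (metis Ints_add)
  qed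
  have key: "N dvd D * k" if "of_int D * (l * of_int k) \<in> \<int>" for D k :: int
  proof -
    have "of_int (D * k) / of_int N = \<sigma> * (of_int D * (l * of_int k))"
      unfolding lval using Npos \<sigma>2 by (simp add: field_simps)
    also have "\<dots> \<in> \<int>" using \<sigma>Z that by simp
    finally show ?thesis using ints_div_dvd Npos by auto
  qed
  have lower: "N dvd D" if D: "\<forall>i. of_int D * fst (z i) \<in> \<int> \<and> of_int D * snd (z i) \<in> \<int>" for D :: int
  proof -
    have dZ: "of_int D * (fst (z j) - fst (z i)) \<in> \<int>" "of_int D * (snd (z j) - snd (z i)) \<in> \<int>" for i j
      using D by (metis Ints_diff right_diff_distrib)+
    have "N dvd D * (w1 * c1)" using key dZ(1)[of P2 P1] dx12 by simp
    moreover have "N dvd D * (w1 * d1)" using key dZ(2)[of P2 P1] dx12 by simp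
    ultimately have a1: "N dvd (D * w1)" using dvd_coprime2[OF _ _ g1, of N "D*w1"] by (simp add: mult.assoc)
    have "N dvd D * (- (w2 * c2))" using key[of D "- (w2 * c2)"] dZ(1)[of P3 P1] dx13 by simp
    moreover have "N dvd D * (- (w2 * d2))" using key[of D "- (w2 * d2)"] dZ(2)[of P3 P1] dx13 by simp
    ultimately have a2: "N dvd (D * w2)" using dvd_coprime2[OF _ _ g2, of N "D*w2"] by (simp add: mult.assoc)
    have "N dvd D * (w3 * c3)" using key dZ(1)[of P3 P2] dx23 by simp
    moreover have "N dvd D * (w3 * d3)" using key dZ(2)[of P3 P2] dx23 by simp
    ultimately have a3: "N dvd (D * w3)" using dvd_coprime2[OF _ _ g3, of N "D*w3"] by (simp add: mult.assoc)
    show ?thesis using dvd_coprime3[OF a1 a2 a3 gw] .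
  qed
  have "Delta z = nat N"
    unfolding Delta_def
  proof (rule Least_equality)
    show "0 < nat N \<and> (\<forall>i. real (nat N) * fst (z i) \<in> \<int> \<and> real (nat N) * snd (z i) \<in> \<int>)"
      using Npos allX allY by simp
  next
    fix D :: nat assume "0 < D \<and> (\<forall>i. real D * fst (z i) \<in> \<int> \<and> real D * snd (z i) \<in> \<int>)"
    then have "N dvd int D" "int D > 0" using lower[of "int D"] by auto
    then have "N \<le> int D" using zdvd_imp_le by blast
    then show "nat N \<le> D" by simp
  qed
  then show ?thesis using Npos unfolding N_def[symmetric] by simp
qed



lemma swap12: "max (a::int) (max b (max c (max d R))) = max c (max d (max a (max b R)))"
  by (simp add: max_def)

lemma swap23: "max (a::int) (max b (max c (max d (max e f)))) = max a (max b (max e (max f (max c d))))"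
  by (simp add: max_def)

theorem proposition5p1:
  fixes M :: "(int \<times> int) set" and c1 d1 c2 d2 c3 d3 w1 w2 w3 :: int and z :: config
  assumes "rider_piece M"
    and "(c1,d1) \<in> M" and "(c2,d2) \<in> M" and "(c3,d3) \<in> M"
    and "(c1,d1) \<noteq> (c2,d2)" and "(c1,d1) \<noteq> (c3,d3)" and "(c2,d2) \<noteq> (c3,d3)"
    and "w1 \<noteq> 0" and "w2 \<noteq> 0" and "w3 \<noteq> 0"
    and "gcd w1 (gcd w2 w3) = 1"
    and "w1 * c1 + w2 * c2 + w3 * c3 = 0" and "w1 * d1 + w2 * d2 + w3 * d3 = 0"
    and "in_box z"
    and "(fst (z P2) - fst (z P1)) * (snd (z P3) - snd (z P1))
         - (snd (z P2) - snd (z P1)) * (fst (z P3) - fst (z P1)) \<noteq> 0"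
    and "\<exists>a b c f1 f2 f3. {a, b, c} = {(c1,d1), (c2,d2), (c3,d3)}
           \<and> fixation f1 \<and> fixation f2 \<and> fixation f3
           \<and> solutions {MoveEq a P1 P2, MoveEq b P1 P3, MoveEq c P2 P3, f1, f2, f3} = {z}"
  shows "is_vertex M z \<and>
    int (Delta z) = max \<bar>w1 * c1\<bar> (max \<bar>w1 * d1\<bar> (max \<bar>w2 * c2\<bar>
                     (max \<bar>w2 * d2\<bar> (max \<bar>w3 * c3\<bar> \<bar>w3 * d3\<bar>))))"
proof -
  obtain a b c f1 f2 f3 where A: "{a, b, c} = {(c1,d1), (c2,d2), (c3,d3)}"
    and F: "fixation f1" "fixation f2" "fixation f3"
    and S: "solutions {MoveEq a P1 P2, MoveEq b P1 P3, MoveEq c P2 P3, f1, f2, f3} = {z}"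
    using assms(16) by blast
  have rp: "\<forall>(c,d)\<in>M. gcd c d = 1" "\<forall>(c,d)\<in>M. \<forall>(c',d')\<in>M. (c,d) \<noteq> (c',d') \<longrightarrow> c * d' \<noteq> d * c'"
    using assms(1) unfolding rider_piece_def by auto
  have g: "gcd c1 d1 = 1" "gcd c2 d2 = 1" "gcd c3 d3 = 1" using rp(1) assms(2-4) by auto
  have np: "c1 * d2 \<noteq> d1 * c2" "c2 * d1 \<noteq> d2 * c1" "c1 * d3 \<noteq> d1 * c3" "c3 * d1 \<noteq> d3 * c1"
     "c2 * d3 \<noteq> d2 * c3" "c3 * d2 \<noteq> d3 * c2"
    using rp(2) assms(2-7) by (fastforce)+
  have gw': "gcd w1 (gcd w2 w3) = 1" "gcd w1 (gcd w3 w2) = 1" "gcd w2 (gcd w1 w3) = 1"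
    "gcd w2 (gcd w3 w1) = 1" "gcd w3 (gcd w1 w2) = 1" "gcd w3 (gcd w2 w1) = 1"
    using assms(11) by (metis gcd.commute gcd.left_commute)+
  note rc = assms(12) and rd = assms(13)
  have vert: "is_vertex M z"
    unfolding is_vertex_def
  proof (intro conjI exI)
    show "in_box z" by (rule assms(14))
    have sub: "{a,b,c} \<subseteq> M" unfolding A using assms(2-4) by auto
    then have "a \<in> M" "b \<in> M" "c \<in> M" by auto
    then have "move_eqn M (MoveEq a P1 P2)" "move_eqn M (MoveEq b P1 P3)" "move_eqn M (MoveEq c P2 P3)"
        unfolding move_eqn_def by blast+
    then show "\<forall>e\<in>{MoveEq a P1 P2, MoveEq b P1 P3, MoveEq c P2 P3, f1, f2, f3}. move_eqn M e \<or> fixation e"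
      using F by auto
    show "solutions {MoveEq a P1 P2, MoveEq b P1 P3, MoveEq c P2 P3, f1, f2, f3} = {z}" by (rule S)
  qed
  have P: "(a = (c1,d1) \<and> b = (c2,d2) \<and> c = (c3,d3)) \<or> (a = (c1,d1) \<and> b = (c3,d3) \<and> c = (c2,d2)) \<or> (a = (c2,d2) \<and> b = (c1,d1) \<and> c = (c3,d3)) \<or> (a = (c2,d2) \<and> b = (c3,d3) \<and> c = (c1,d1)) \<or> (a = (c3,d3) \<and> b = (c1,d1) \<and> c = (c2,d2)) \<or> (a = (c3,d3) \<and> b = (c2,d2) \<and> c = (c1,d1))"
  proof -
    have i1: "a \<in> {(c1,d1), (c2,d2), (c3,d3)}" "b \<in> {(c1,d1), (c2,d2), (c3,d3)}" "c \<in> {(c1,d1), (c2,d2), (c3,d3)}"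
      unfolding A[symmetric] by simp_all
    have i2: "(c1,d1) \<in> {a,b,c}" "(c2,d2) \<in> {a,b,c}" "(c3,d3) \<in> {a,b,c}" unfolding A by simp_all
    have "a \<noteq> b" using i2 assms(5-7) by auto
    moreover have "a \<noteq> c" using i2 assms(5-7) by auto
    moreover have "b \<noteq> c" using i2 assms(5-7) by auto
    ultimately show ?thesis using i1 by auto
  qed
  have "int (Delta z) = max \<bar>w1 * c1\<bar> (max \<bar>w1 * d1\<bar> (max \<bar>w2 * c2\<bar>
                     (max \<bar>w2 * d2\<bar> (max \<bar>w3 * c3\<bar> \<bar>w3 * d3\<bar>))))"
    using P
  proof (elim disjE)
    assume h: "a = (c1,d1) \<and> b = (c2,d2) \<and> c = (c3,d3)"
    have "int (Delta z) = max \<bar>w1 * c1\<bar> (max \<bar>w1 * d1\<bar> (max \<bar>w2 * c2\<bar>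
                     (max \<bar>w2 * d2\<bar> (max \<bar>w3 * c3\<bar> \<bar>w3 * d3\<bar>))))"
    proof (rule core[where ?f1.0=f1 and ?f2.0=f2 and ?f3.0=f3])
      show "solutions {MoveEq (c1,d1) P1 P2, MoveEq (c2,d2) P1 P3, MoveEq (c3,d3) P2 P3, f1, f2, f3} = {z}"
        using S h by simp
    qed (use g np assms(8-10,14,15) gw' F rc rd in \<open>simp_all add: algebra_simps\<close>)
    then show ?thesis by (metis swap12 swap23)
  next
    assume h: "a = (c1,d1) \<and> b = (c3,d3) \<and> c = (c2,d2)"
    have "int (Delta z) = max \<bar>w1 * c1\<bar> (max \<bar>w1 * d1\<bar> (max \<bar>w3 * c3\<bar>
                     (max \<bar>w3 * d3\<bar> (max \<bar>w2 * c2\<bar> \<bar>w2 * d2\<bar>))))"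
    proof (rule core[where ?f1.0=f1 and ?f2.0=f2 and ?f3.0=f3])
      show "solutions {MoveEq (c1,d1) P1 P2, MoveEq (c3,d3) P1 P3, MoveEq (c2,d2) P2 P3, f1, f2, f3} = {z}"
        using S h by simp
    qed (use g np assms(8-10,14,15) gw' F rc rd in \<open>simp_all add: algebra_simps\<close>)
    then show ?thesis by (metis swap12 swap23)
  next
    assume h: "a = (c2,d2) \<and> b = (c1,d1) \<and> c = (c3,d3)"
    have "int (Delta z) = max \<bar>w2 * c2\<bar> (max \<bar>w2 * d2\<bar> (max \<bar>w1 * c1\<bar>
                     (max \<bar>w1 * d1\<bar> (max \<bar>w3 * c3\<bar> \<bar>w3 * d3\<bar>))))"
    proof (rule core[where ?f1.0=f1 and ?f2.0=f2 and ?f3.0=f3])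
      show "solutions {MoveEq (c2,d2) P1 P2, MoveEq (c1,d1) P1 P3, MoveEq (c3,d3) P2 P3, f1, f2, f3} = {z}"
        using S h by simp
    qed (use g np assms(8-10,14,15) gw' F rc rd in \<open>simp_all add: algebra_simps\<close>)
    then show ?thesis by (metis swap12 swap23)
  next
    assume h: "a = (c2,d2) \<and> b = (c3,d3) \<and> c = (c1,d1)"
    have "int (Delta z) = max \<bar>w2 * c2\<bar> (max \<bar>w2 * d2\<bar> (max \<bar>w3 * c3\<bar>
                     (max \<bar>w3 * d3\<bar> (max \<bar>w1 * c1\<bar> \<bar>w1 * d1\<bar>))))"
    proof (rule core[where ?f1.0=f1 and ?f2.0=f2 and ?f3.0=f3])
      show "solutions {MoveEq (c2,d2) P1 P2, MoveEq (c3,d3) P1 P3, MoveEq (c1,d1) P2 P3, f1, f2, f3} = {z}"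
        using S h by simp
    qed (use g np assms(8-10,14,15) gw' F rc rd in \<open>simp_all add: algebra_simps\<close>)
    then show ?thesis by (metis swap12 swap23)
  next
    assume h: "a = (c3,d3) \<and> b = (c1,d1) \<and> c = (c2,d2)"
    have "int (Delta z) = max \<bar>w3 * c3\<bar> (max \<bar>w3 * d3\<bar> (max \<bar>w1 * c1\<bar>
                     (max \<bar>w1 * d1\<bar> (max \<bar>w2 * c2\<bar> \<bar>w2 * d2\<bar>))))"
    proof (rule core[where ?f1.0=f1 and ?f2.0=f2 and ?f3.0=f3])
      show "solutions {MoveEq (c3,d3) P1 P2, MoveEq (c1,d1) P1 P3, MoveEq (c2,d2) P2 P3, f1, f2, f3} = {z}"
        using S h by simp
    qed (use g np assms(8-10,14,15) gw' F rc rd in \<open>simp_all add: algebra_simps\<close>)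
    then show ?thesis by (metis swap12 swap23)
  next
    assume h: "a = (c3,d3) \<and> b = (c2,d2) \<and> c = (c1,d1)"
    have "int (Delta z) = max \<bar>w3 * c3\<bar> (max \<bar>w3 * d3\<bar> (max \<bar>w2 * c2\<bar>
                     (max \<bar>w2 * d2\<bar> (max \<bar>w1 * c1\<bar> \<bar>w1 * d1\<bar>))))"
    proof (rule core[where ?f1.0=f1 and ?f2.0=f2 and ?f3.0=f3])
      show "solutions {MoveEq (c3,d3) P1 P2, MoveEq (c2,d2) P1 P3, MoveEq (c1,d1) P2 P3, f1, f2, f3} = {z}"
        using S h by simp
    qed (use g np assms(8-10,14,15) gw' F rc rd in \<open>simp_all add: algebra_simps\<close>)
    then show ?thesis by (metis swap12 swap23)
  qed
  then show ?thesis using vert by blast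
qed

end
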